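(* Let $p,q$ be integers with $1+|p|<|q|$ and let $t(x)=x^2+px-q$. Then every polynomial $f\in\mathbb{Z}[x]$ is equivalent modulo $t$ to a reduced polynomial, i.e. there is $\widetilde f(x)=\sum_{i=0}^m b_ix^i\in\mathbb{Z}[x]$ with $|b_i|<|q|$ for all $i$ such that $t$ divides $f-\widetilde f$.
   Context: A polynomial $\sum_i a_ix^i\in\mathbb{Z}[x]$ is called reduced (with respect to $q$) if $|a_i|<|q|$ for all $i$. *)

theory Defs
  imports "HOL-Computational_Algebra.Polynomial"
begin

definition reduced :: "int \<Rightarrow> int poly \<Rightarrow> bool" where
  "reduced q f \<longleftrightarrow> (\<forall>i. \<bar>coeff f i\<bar> < \<bar>q\<bar>)"

end

theory Submission
  imports Defs
begin

lemma sum_coeff_ext: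
  fixes g :: "int poly"
  assumes "degree g < K"
  shows "(\<Sum>j<K. \<bar>coeff g j\<bar>) = (\<Sum>j\<le>degree g. \<bar>coeff g j\<bar>)"
  by (rule sum.mono_neutral_right) (use assms in \<open>auto simp: coeff_eq_0\<close>)

lemma main:
  fixes p q :: int and g :: "int poly"
  assumes "1 + \<bar>p\<bar> < \<bar>q\<bar>"
  shows "\<exists>h. reduced q h \<and> [:-q, p, 1:] dvd (g - h)"
  using assms
proof (induction "nat (\<Sum>j\<le>degree g. \<bar>coeff g j\<bar>)" arbitrary: g rule: less_induct)
  case less
  show ?case
  proof (cases "reduced q g")
    case True then show ?thesis by (intro exI[of _ g]) auto
  next
    case False
    then obtain i where hi: "\<bar>coeff g i\<bar> \<ge> \<bar>q\<bar>" by (auto simp: reduced_def not_less)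
    have q0: "q \<noteq> 0" using less.prems by auto
    define s where "s = sgn (coeff g i) * sgn q"
    define t where "t = [:-q,p,1:]"
    define g' where "g' = g + monom s i * t"
    define K where "K = degree g + degree g' + i + 3"
    have c: "coeff g' j = coeff g j + (if i \<le> j then s * coeff t (j - i) else 0)" for j
      by (simp add: g'_def coeff_monom_mult)
    define b where "b j = (if j = i then -\<bar>q\<bar> else 0) + (if j = i+1 then \<bar>p\<bar> else 0)
       + (if j = i+2 then 1 else (0::int))" for j
    have s1: "\<bar>s\<bar> \<le> 1" by (simp add: s_def abs_mult abs_sgn_eq)
    have dt: "degree t = 2" by (simp add: t_def)
    have pt: "\<bar>coeff g' j\<bar> - \<bar>coeff g j\<bar> \<le> b j" for j
    proof -
      consider "j < i" | "j = i" | "j = i+1" | "j = i+2" | "j > i+2" by linarith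
      then show ?thesis
      proof cases
        case 1 then show ?thesis by (simp add: c b_def)
      next
        case 2
        have "coeff g' j = coeff g i - s * q" using 2 by (simp add: c t_def)
        moreover have "\<bar>coeff g i - s * q\<bar> = \<bar>coeff g i\<bar> - \<bar>q\<bar>"
          using hi q0 unfolding s_def
          by (cases "coeff g i > 0"; cases "q > 0") (auto simp: sgn_if)
        ultimately show ?thesis using 2 by (simp add: b_def)
      next
        case 3
        have "coeff g' j = coeff g j + s * p" using 3 by (simp add: c t_def)
        moreover have "\<bar>s * p\<bar> \<le> \<bar>p\<bar>" using s1
          by (simp add: abs_mult mult_left_le_one_le)
        ultimately show ?thesis using 3 by (simp add: b_def)
      next
        case 4
        have "coeff t 2 = 1" by (simp add: t_def numeral_2_eq_2)
        then have "coeff g' j = coeff g j + s" using 4 by (simp add: c)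
        then show ?thesis using 4 s1 by (simp add: b_def)
      next
        case 5
        have "coeff t (j - i) = 0" using 5 dt by (intro coeff_eq_0) auto
        then show ?thesis using 5 by (simp add: c b_def)
      qed
    qed
    have iK: "i + 2 < K" by (simp add: K_def)
    have bs: "(\<Sum>j<K. b j) = -\<bar>q\<bar> + \<bar>p\<bar> + 1"
      using iK by (simp add: b_def sum.distrib)
    have "(\<Sum>j<K. \<bar>coeff g' j\<bar>) - (\<Sum>j<K. \<bar>coeff g j\<bar>) \<le> (\<Sum>j<K. b j)"
      unfolding sum_subtractf[symmetric] by (rule sum_mono) (use pt in auto)
    then have lt: "(\<Sum>j<K. \<bar>coeff g' j\<bar>) < (\<Sum>j<K. \<bar>coeff g j\<bar>)"
      using bs less.prems by linarith
    have e1: "(\<Sum>j<K. \<bar>coeff g' j\<bar>) = (\<Sum>j\<le>degree g'. \<bar>coeff g' j\<bar>)"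
      by (rule sum_coeff_ext) (simp add: K_def)
    have e2: "(\<Sum>j<K. \<bar>coeff g j\<bar>) = (\<Sum>j\<le>degree g. \<bar>coeff g j\<bar>)"
      by (rule sum_coeff_ext) (simp add: K_def)
    have nn: "0 \<le> (\<Sum>j\<le>degree g'. \<bar>coeff g' j\<bar>)" by (simp add: sum_nonneg)
    have "nat (\<Sum>j\<le>degree g'. \<bar>coeff g' j\<bar>) < nat (\<Sum>j\<le>degree g. \<bar>coeff g j\<bar>)"
      using lt e1 e2 nn by linarith
    from less.hyps[OF this less.prems] obtain h where
      h: "reduced q h" "[:-q, p, 1:] dvd (g' - h)" by blast
    have "g - h = (g' - h) - monom s i * t" by (simp add: g'_def)
    moreover have "t dvd monom s i * t" by simp
    ultimately have "t dvd (g - h)" using h(2) unfolding t_def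
      by (metis dvd_diff t_def)
    then show ?thesis using h(1) unfolding t_def by blast
  qed
qed

theorem proposition1:
  fixes p q :: int and f :: "int poly"
  assumes "1 + \<bar>p\<bar> < \<bar>q\<bar>"
  shows "\<exists>g :: int poly. reduced q g \<and> [:-q, p, 1:] dvd (f - g)"
  using main[OF assms] .

end
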